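(* Let $\gamma_a,\gamma_s>0$, $\lambda\ge 0$, $q>0$, $\sigma_B>0$, $\varepsilon_a\in(0,2)$, let $\beta_a,\beta_s:\mathbb R\to\mathbb R$ be globally Lipschitz continuous with $\beta_a\ge0$, $\beta_s>0$, and let $T_a^{(0)}\ge 0$, $T_s^{(0)}\ge 0$. Then the solution of \[ \begin{cases} \gamma_a T_a'=-\lambda(T_a-T_s)+\varepsilon_a\sigma_B|T_s|^3T_s-2\varepsilon_a\sigma_B|T_a|^3T_a+q\beta_a(T_a),\\ \gamma_s T_s'=-\lambda(T_s-T_a)-\sigma_B|T_s|^3T_s+\varepsilon_a\sigma_B|T_a|^3T_a+q\beta_s(T_s),\\ T_a(0)=T_a^{(0)},\quad T_s(0)=T_s^{(0)} \end{cases} \] converges, as $t\to+\infty$, to an equilibrium point of this system (a zero of its right-hand side). *)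

theory Defs
  imports "HOL-Analysis.Analysis"
begin

text \<open>Right-hand sides (multiplied form, i.e. gamma_a Ta' = rhs_a, gamma_s Ts' = rhs_s).\<close>

definition rhs_a :: "real \<Rightarrow> real \<Rightarrow> real \<Rightarrow> real \<Rightarrow> (real \<Rightarrow> real) \<Rightarrow> real \<Rightarrow> real \<Rightarrow> real" where
  "rhs_a lam q sB ea betaa Ta Ts =
     - lam * (Ta - Ts) + ea * sB * \<bar>Ts\<bar>^3 * Ts - 2 * ea * sB * \<bar>Ta\<bar>^3 * Ta + q * betaa Ta"

definition rhs_s :: "real \<Rightarrow> real \<Rightarrow> real \<Rightarrow> real \<Rightarrow> (real \<Rightarrow> real) \<Rightarrow> real \<Rightarrow> real \<Rightarrow> real" where
  "rhs_s lam q sB ea betas Ta Ts =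
     - lam * (Ts - Ta) - sB * \<bar>Ts\<bar>^3 * Ts + ea * sB * \<bar>Ta\<bar>^3 * Ta + q * betas Ts"

end

theory Submission
  imports Defs "HOL-Analysis.Analysis"
begin

lemma p_mono:
  fixes a b :: real
  assumes "a \<le> b" shows "\<bar>a\<bar>^3*a \<le> \<bar>b\<bar>^3*b"
proof (cases "0 \<le> a")
  case True
  then have "a^4 \<le> b^4" using assms by (intro power_mono) auto
  then show ?thesis using True assms by (simp add: power4_eq_xxxx power3_eq_cube)
next
  case False
  show ?thesis
  proof (cases "0 \<le> b")
    case True
    have "\<bar>a\<bar>^3*a = -(a^4)" using False by (simp add: power3_eq_cube power4_eq_xxxx)
    moreover have "\<bar>b\<bar>^3*b = b^4" using True by (simp add: power3_eq_cube power4_eq_xxxx)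
    moreover have "0 \<le> a^4" "0 \<le> b^4" by auto
    ultimately show ?thesis by linarith
  next
    case False2: False
    have "(-b)^4 \<le> (-a)^4" using assms False2 by (intro power_mono) auto
    then show ?thesis using False False2 by (simp add: power4_eq_xxxx power3_eq_cube)
  qed
qed

lemma p_lip:
  fixes a b B :: real
  assumes "\<bar>a\<bar> \<le> B" "\<bar>b\<bar> \<le> B" "a \<le> b"
  shows "\<bar>b\<bar>^3*b - \<bar>a\<bar>^3*a \<le> 4*B^3*(b-a)"
proof -
  have B0: "0 \<le> B" using assms by linarith
  have key: "b^4 - a^4 \<le> 4*B^3*(b-a)" if "0 \<le> a" "a \<le> b" "b \<le> B" for a b :: real
  proof -
    have e: "b^4 - a^4 = (b-a)*(b^3+b^2*a+b*a^2+a^3)"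
      by (simp add: power_numeral_reduce ring_distribs mult.assoc mult.commute mult.left_commute)
    have "b^3 \<le> B^3" "a^3 \<le> B^3" using that by (auto intro: power_mono)
    moreover have "b^2*a \<le> B^2*B" using that by (intro mult_mono power_mono) auto
    moreover have "b*a^2 \<le> B*B^2" using that by (intro mult_mono power_mono) auto
    ultimately have "b^3+b^2*a+b*a^2+a^3 \<le> 4*B^3" by (simp add: power3_eq_cube power2_eq_square)
    then have "(b-a)*(b^3+b^2*a+b*a^2+a^3) \<le> (b-a)*(4*B^3)" using that by (intro mult_left_mono) auto
    moreover have "(b-a)*(4*B^3) = 4*B^3*(b-a)" by (rule mult.commute)
    ultimately show ?thesis using e by linarith
  qed
  show ?thesis
  proof (cases "0 \<le> a")
    case True
    have "\<bar>b\<bar>^3*b = b^4" "\<bar>a\<bar>^3*a = a^4" using True assms by (simp_all add: power3_eq_cube power4_eq_xxxx)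
    then show ?thesis using key[of a b] True assms by simp
  next
    case False
    show ?thesis
    proof (cases "0 \<le> b")
      case True
      have "b^4 \<le> B^3 * b" using True assms by (simp add: power4_eq_xxxx power3_eq_cube mult_mono mult_left_mono)
      have "b^4 \<le> b^3 * b" by (simp add: power4_eq_xxxx power3_eq_cube)
      have b1: "b^3 \<le> B^3" using True assms by (intro power_mono) auto
      have b2: "(-a)^3 \<le> B^3" using False assms by (intro power_mono) auto
      have "b^3*b \<le> B^3*b" using b1 True by (rule mult_right_mono)
      moreover have "(-a)^3*(-a) \<le> B^3*(-a)" using b2 False by (intro mult_right_mono) auto
      moreover have "0 \<le> B^3*(b-a)" using B0 assms by simp
      moreover have "\<bar>b\<bar>^3*b - \<bar>a\<bar>^3*a = b^3*b + (-a)^3*(-a)" using True False by (simp add: power3_eq_cube)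
      moreover have "B^3*b + B^3*(-a) = B^3*(b-a)" by (simp add: algebra_simps)
      ultimately show ?thesis by linarith
    next
      case False2: False
      have "(-a)^4 - (-b)^4 \<le> 4*B^3*((-a)-(-b))" using key[of "-b" "-a"] assms False2 by auto
      then have "(-a)^4 - (-b)^4 \<le> 4*B^3*(b-a)" by simp
      moreover have "\<bar>b\<bar>^3*b = -((-b)^4)" using False2 by (simp add: power3_eq_cube power4_eq_xxxx)
      moreover have "\<bar>a\<bar>^3*a = -((-a)^4)" using False by (simp add: power3_eq_cube power4_eq_xxxx)
      ultimately show ?thesis by linarith
    qed
  qed
qed

lemma pos2_deriv: "((\<lambda>z::real. (max z 0)^2) has_real_derivative 2 * max z 0) (at z)"
proof (cases "z = 0")
  case True
  have "((\<lambda>h. ((max (z+h) 0)^2 - (max z 0)^2) / h) \<longlongrightarrow> 0) (at 0)"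
  proof (rule Lim_null_comparison)
    show "\<forall>\<^sub>F h in at 0. norm (((max (z+h) 0)^2 - (max z 0)^2) / h) \<le> \<bar>h\<bar>"
    proof (rule always_eventually, rule allI)
      fix h :: real
      show "norm (((max (z+h) 0)^2 - (max z 0)^2) / h) \<le> \<bar>h\<bar>"
      proof (cases "h > 0")
        case True
        then show ?thesis using \<open>z = 0\<close> by (simp add: power2_eq_square)
      next
        case False
        then show ?thesis using \<open>z = 0\<close> by (simp add: max_def)
      qed
    qed
    show "((\<lambda>h::real. \<bar>h\<bar>) \<longlongrightarrow> 0) (at 0)"
      by (rule tendsto_rabs_zero[OF tendsto_ident_at])
  qed
  then show ?thesis using True by (simp add: DERIV_def)
next
  case False
  show ?thesis
  proof (cases "z > 0")
    case True
    have "((\<lambda>z. z^2) has_real_derivative 2 * max z 0) (at z)" using True by (auto intro!: derivative_eq_intros simp: max_def)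
    then show ?thesis
      apply (rule has_field_derivative_transform_within_open[where S="{0<..}"])
      using True by auto
  next
    case False2: False
    then have "z < 0" using False by auto
    have "((\<lambda>z. 0) has_real_derivative 2 * max z 0) (at z)" using \<open>z<0\<close> by (auto intro!: derivative_eq_intros simp: max_def)
    then show ?thesis
      apply (rule has_field_derivative_transform_within_open[where S="{..<0}"])
      using \<open>z<0\<close> by (auto simp: max_def)
  qed
qed

lemma incr_from_deriv:
  fixes f f' :: "real \<Rightarrow> real"
  assumes "continuous_on {tt..} f" "\<And>t. t > tt \<Longrightarrow> (f has_real_derivative f' t) (at t)"
    "\<And>t. t > tt \<Longrightarrow> f' t \<ge> 0" "tt \<le> a" "a \<le> b"
  shows "f a \<le> f b"
proof (rule DERIV_nonneg_imp_increasing_open[of a b f])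
  show "a \<le> b" by fact
  show "\<exists>y. (f has_real_derivative y) (at x) \<and> 0 \<le> y" if "a < x" "x < b" for x
    using assms that by force
  show "continuous_on {a..b} f" using assms(1) by (rule continuous_on_subset) (use assms in auto)
qed

lemma cont_from_deriv:
  fixes f f' :: "real \<Rightarrow> real"
  assumes "\<And>t. t > tt \<Longrightarrow> (f has_real_derivative f' t) (at t)" "tt < a"
  shows "continuous_on {a..} f"
proof (rule continuous_at_imp_continuous_on, intro ballI)
  fix x assume "x \<in> {a..}"
  then have "x > tt" using assms(2) by auto
  from DERIV_continuous[OF assms(1)[OF this]] show "isCont f x" .
qed

lemma incr_bounded_tendsto:
  fixes f :: "real \<Rightarrow> real"
  assumes mono: "\<And>a b. tt \<le> a \<Longrightarrow> a \<le> b \<Longrightarrow> f a \<le> f b" and bd: "\<And>t. t \<ge> tt \<Longrightarrow> f t \<le> M"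
  shows "\<exists>l. (f \<longlongrightarrow> l) at_top"
proof -
  define l where "l = Sup (f ` {tt..})"
  have bdd: "bdd_above (f ` {tt..})" using bd by (intro bdd_aboveI[of _ M]) auto
  have ne: "f ` {tt..} \<noteq> {}" by auto
  have le: "f t \<le> l" if "t \<ge> tt" for t unfolding l_def using bdd that by (intro cSup_upper) auto
  have "(f \<longlongrightarrow> l) at_top"
  proof (rule order_tendstoI)
    fix y assume "y < l"
    then obtain x where "x \<in> f ` {tt..}" "y < x" using less_cSup_iff[OF ne bdd] unfolding l_def by blast
    then obtain t1 where t1: "t1 \<ge> tt" "y < f t1" by auto
    show "\<forall>\<^sub>F t in at_top. y < f t"
      unfolding eventually_at_top_linorder
      by (rule exI[of _ t1]) (use t1 mono in force)
  next
    fix y assume "l < y"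
    show "\<forall>\<^sub>F t in at_top. f t < y"
      unfolding eventually_at_top_linorder
      by (rule exI[of _ tt]) (use le \<open>l < y\<close> in force)
  qed
  then show ?thesis by blast
qed

lemma decr_bounded_tendsto:
  fixes f :: "real \<Rightarrow> real"
  assumes mono: "\<And>a b. tt \<le> a \<Longrightarrow> a \<le> b \<Longrightarrow> f b \<le> f a" and bd: "\<And>t. t \<ge> tt \<Longrightarrow> M \<le> f t"
  shows "\<exists>l. (f \<longlongrightarrow> l) at_top"
proof -
  have "\<exists>l. ((\<lambda>t. - f t) \<longlongrightarrow> l) at_top"
    by (rule incr_bounded_tendsto[of tt _ "-M"]) (use mono bd in force)+
  then obtain l where "((\<lambda>t. - f t) \<longlongrightarrow> l) at_top" by blast
  then have "((\<lambda>t. - (- f t)) \<longlongrightarrow> - l) at_top" by (rule tendsto_minus)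
  then show ?thesis by auto
qed

lemma limit_deriv_pos_False:
  fixes f g :: "real \<Rightarrow> real"
  assumes der: "\<And>t. t > tt \<Longrightarrow> (f has_real_derivative g t) (at t)"
    and lf: "(f \<longlongrightarrow> a) at_top" and lg: "(g \<longlongrightarrow> c) at_top" and c: "c > 0"
  shows False
proof -
  have "\<forall>\<^sub>F t in at_top. c/2 < g t" using lg c by (intro order_tendstoD(1)) auto
  then obtain N where N: "\<And>t. t \<ge> N \<Longrightarrow> c/2 < g t" unfolding eventually_at_top_linorder by blast
  define N' where "N' = max N (tt + 1)"
  have N'gt: "tt < N'" "N \<le> N'" unfolding N'_def by auto
  have step: "f t + c/2 \<le> f (t+1)" if "t \<ge> N'" for t
  proof -
    have "f t - c/2 * t \<le> f (t+1) - c/2 * (t+1)"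
    proof (rule incr_from_deriv[where tt=N' and f="\<lambda>s. f s - c/2 * s" and f'="\<lambda>s. g s - c/2"])
      show "continuous_on {N'..} (\<lambda>s. f s - c / 2 * s)"
      proof -
        have "continuous_on {N'..} f" using cont_from_deriv[of tt f g N'] der N'gt by blast
        then show ?thesis by (intro continuous_intros)
      qed
      show "((\<lambda>s. f s - c / 2 * s) has_real_derivative g s - c / 2) (at s)" if "s > N'" for s
        using that N'gt by (auto intro!: derivative_eq_intros der)
      show "g s - c/2 \<ge> 0" if "s > N'" for s using N[of s] that N'gt by auto
    qed (use that in auto)
    moreover have "c/2*(t+1) = c/2*t + c/2" by (simp add: ring_distribs)
    ultimately show ?thesis by linarith
  qed
  have sh: "filterlim (\<lambda>t::real. t + 1) at_top at_top"
    using filterlim_tendsto_add_at_top[OF tendsto_const[of "1::real" at_top] filterlim_ident] by (simp add: add.commute)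
  have "((\<lambda>t. f (t+1) - f t) \<longlongrightarrow> a - a) at_top"
    by (intro tendsto_diff filterlim_compose[OF lf sh] lf)
  then have "\<forall>\<^sub>F t in at_top. f (t+1) - f t < c/2" using c by (intro order_tendstoD(2)) auto
  moreover have "\<forall>\<^sub>F t in at_top. f (t+1) - f t \<ge> c/2"
    unfolding eventually_at_top_linorder by (rule exI[of _ N']) (use step in force)
  ultimately have "\<forall>\<^sub>F t in at_top. f (t+1) - f t < c/2 \<and> f (t+1) - f t \<ge> c/2" by (rule eventually_conj)
  then obtain M where "\<And>t. t \<ge> M \<Longrightarrow> f (t+1) - f t < c/2 \<and> f (t+1) - f t \<ge> c/2"
    unfolding eventually_at_top_linorder by blast
  from this[of M] show False by auto
qed

lemma limit_deriv_zero:
  fixes f g :: "real \<Rightarrow> real"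
  assumes der: "\<And>t. t > tt \<Longrightarrow> (f has_real_derivative g t) (at t)"
    and lf: "(f \<longlongrightarrow> a) at_top" and lg: "(g \<longlongrightarrow> c) at_top"
  shows "c = 0"
proof -
  have "\<not> c > 0" using limit_deriv_pos_False[OF der lf lg] by blast
  moreover have "\<not> -c > 0"
  proof
    assume "-c > 0"
    show False
    proof (rule limit_deriv_pos_False[where f="\<lambda>t. - f t" and g="\<lambda>t. - g t" and tt=tt])
      show "((\<lambda>t. - f t) has_real_derivative - g t) (at t)" if "t > tt" for t
        using der[OF that] by (rule DERIV_minus)
      show "((\<lambda>t. - f t) \<longlongrightarrow> - a) at_top" using lf by (rule tendsto_minus)
      show "((\<lambda>t. - g t) \<longlongrightarrow> - c) at_top" using lg by (rule tendsto_minus)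
    qed fact
  qed
  ultimately show ?thesis by linarith
qed

lemma bound_on_Icc:
  fixes f :: "real \<Rightarrow> real"
  assumes "continuous_on {tt..} f"
  shows "\<exists>B. \<forall>t\<in>{tt..T}. \<bar>f t\<bar> \<le> B"
proof -
  have "continuous_on {tt..T} f" using assms by (rule continuous_on_subset) auto
  then have "compact (f ` {tt..T})" by (intro compact_continuous_image) auto
  then have "bounded (f ` {tt..T})" by (rule compact_imp_bounded)
  then show ?thesis unfolding bounded_iff by auto
qed

lemma comparison:
  fixes FA FS :: "real \<Rightarrow> real \<Rightarrow> real" and xa xs ya ys xa' xs' ya' ys' :: "real \<Rightarrow> real"
  assumes mono1: "\<And>a s s'. s \<le> s' \<Longrightarrow> FA a s \<le> FA a s'"
    and mono2: "\<And>a a' s. a \<le> a' \<Longrightarrow> FS a s \<le> FS a' s"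
    and lip: "\<And>B. \<exists>K\<ge>0. \<forall>a a' s s'. \<bar>a\<bar> \<le> B \<longrightarrow> \<bar>a'\<bar> \<le> B \<longrightarrow> \<bar>s\<bar> \<le> B \<longrightarrow> \<bar>s'\<bar> \<le> B \<longrightarrow> a \<le> a' \<longrightarrow> s \<le> s' \<longrightarrow>
         FA a' s - FA a s \<le> K*(a'-a) \<and> FA a s' - FA a s \<le> K*(s'-s) \<and>
         FS a' s - FS a s \<le> K*(a'-a) \<and> FS a s' - FS a s \<le> K*(s'-s)"
    and cxa: "continuous_on {tt..} xa" and cxs: "continuous_on {tt..} xs"
    and cya: "continuous_on {tt..} ya" and cys: "continuous_on {tt..} ys"
    and dxa: "\<And>t. t > tt \<Longrightarrow> (xa has_real_derivative xa' t) (at t)"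
    and dxs: "\<And>t. t > tt \<Longrightarrow> (xs has_real_derivative xs' t) (at t)"
    and dya: "\<And>t. t > tt \<Longrightarrow> (ya has_real_derivative ya' t) (at t)"
    and dys: "\<And>t. t > tt \<Longrightarrow> (ys has_real_derivative ys' t) (at t)"
    and ixa: "\<And>t. t > tt \<Longrightarrow> xa' t \<le> FA (xa t) (xs t)"
    and ixs: "\<And>t. t > tt \<Longrightarrow> xs' t \<le> FS (xa t) (xs t)"
    and iya: "\<And>t. t > tt \<Longrightarrow> FA (ya t) (ys t) \<le> ya' t"
    and iys: "\<And>t. t > tt \<Longrightarrow> FS (ya t) (ys t) \<le> ys' t"
    and inita: "xa tt \<le> ya tt" and inits: "xs tt \<le> ys tt"
    and T: "tt \<le> T"
  shows "xa T \<le> ya T \<and> xs T \<le> ys T"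
proof -
  obtain B1 where B1: "\<forall>t\<in>{tt..T}. \<bar>xa t\<bar> \<le> B1" using bound_on_Icc[OF cxa] by blast
  obtain B2 where B2: "\<forall>t\<in>{tt..T}. \<bar>xs t\<bar> \<le> B2" using bound_on_Icc[OF cxs] by blast
  obtain B3 where B3: "\<forall>t\<in>{tt..T}. \<bar>ya t\<bar> \<le> B3" using bound_on_Icc[OF cya] by blast
  obtain B4 where B4: "\<forall>t\<in>{tt..T}. \<bar>ys t\<bar> \<le> B4" using bound_on_Icc[OF cys] by blast
  define B where "B = max (max B1 B2) (max B3 B4)"
  have Bt: "\<bar>xa t\<bar> \<le> B \<and> \<bar>xs t\<bar> \<le> B \<and> \<bar>ya t\<bar> \<le> B \<and> \<bar>ys t\<bar> \<le> B" if "t \<in> {tt..T}" for t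
    using B1 B2 B3 B4 that unfolding B_def by fastforce
  obtain K where K0: "K \<ge> 0" and KL: "\<forall>a a' s s'. \<bar>a\<bar> \<le> B \<longrightarrow> \<bar>a'\<bar> \<le> B \<longrightarrow> \<bar>s\<bar> \<le> B \<longrightarrow> \<bar>s'\<bar> \<le> B \<longrightarrow> a \<le> a' \<longrightarrow> s \<le> s' \<longrightarrow>
         FA a' s - FA a s \<le> K*(a'-a) \<and> FA a s' - FA a s \<le> K*(s'-s) \<and>
         FS a' s - FS a s \<le> K*(a'-a) \<and> FS a s' - FS a s \<le> K*(s'-s)"
    using lip[of B] by blast
  define pa where "pa t = max (xa t - ya t) 0" for t
  define ps where "ps t = max (xs t - ys t) 0" for t
  define g where "g t = (pa t)^2 + (ps t)^2" for t
  define g' where "g' t = 2 * pa t * (xa' t - ya' t) + 2 * ps t * (xs' t - ys' t)" for t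
  define C where "C = 4 * K"
  define h where "h t = g t * exp (- C * t)" for t
  have dg: "(g has_real_derivative g' t) (at t)" if "t > tt" for t
  proof -
    have 1: "((\<lambda>t. (max (xa t - ya t) 0)^2) has_real_derivative 2 * max (xa t - ya t) 0 * (xa' t - ya' t)) (at t)"
      by (rule DERIV_chain2[OF pos2_deriv]) (intro derivative_intros dxa dya that)
    have 2: "((\<lambda>t. (max (xs t - ys t) 0)^2) has_real_derivative 2 * max (xs t - ys t) 0 * (xs' t - ys' t)) (at t)"
      by (rule DERIV_chain2[OF pos2_deriv]) (intro derivative_intros dxs dys that)
    have "g = (\<lambda>t. (max (xa t - ya t) 0)^2 + (max (xs t - ys t) 0)^2)"
      unfolding g_def pa_def ps_def by auto
    then show ?thesis unfolding g'_def pa_def ps_def using DERIV_add[OF 1 2] by simp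
  qed
  have key: "g' t \<le> C * g t" if "tt < t" "t < T" for t
  proof -
    have bt: "\<bar>xa t\<bar> \<le> B" "\<bar>xs t\<bar> \<le> B" "\<bar>ya t\<bar> \<le> B" "\<bar>ys t\<bar> \<le> B" using Bt[of t] that by auto
    have pa0: "pa t \<ge> 0" and ps0: "ps t \<ge> 0" unfolding pa_def ps_def by auto
    have c1: "pa t * (xa' t - ya' t) \<le> K * (pa t)^2 + K * (pa t * ps t)"
    proof (cases "xa t - ya t \<le> 0")
      case True
      then show ?thesis unfolding pa_def by simp
    next
      case False
      then have pa: "pa t = xa t - ya t" unfolding pa_def by simp
      have "xa' t - ya' t \<le> FA (xa t) (xs t) - FA (ya t) (ys t)" using ixa[of t] iya[of t] that by auto
      moreover have "FA (xa t) (xs t) - FA (ya t) (xs t) \<le> K * pa t"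
        using KL bt False pa by auto
      moreover have "FA (ya t) (xs t) - FA (ya t) (ys t) \<le> K * ps t"
      proof (cases "xs t \<le> ys t")
        case True
        then show ?thesis using mono1[OF True, of "ya t"] K0 ps0 by (metis diff_le_0_iff_le mult_nonneg_nonneg order_trans)
      next
        case False
        then show ?thesis unfolding ps_def using KL bt by auto
      qed
      ultimately have "xa' t - ya' t \<le> K * pa t + K * ps t" using pa by linarith
      then have "pa t * (xa' t - ya' t) \<le> pa t * (K * pa t + K * ps t)" using pa0 by (rule mult_left_mono)
      then show ?thesis by (simp add: algebra_simps power2_eq_square)
    qed
    have c2: "ps t * (xs' t - ys' t) \<le> K * (ps t)^2 + K * (pa t * ps t)"
    proof (cases "xs t - ys t \<le> 0")
      case True
      then show ?thesis unfolding ps_def by simp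
    next
      case False
      then have ps: "ps t = xs t - ys t" unfolding ps_def by simp
      have "xs' t - ys' t \<le> FS (xa t) (xs t) - FS (ya t) (ys t)" using ixs[of t] iys[of t] that by auto
      moreover have "FS (xa t) (xs t) - FS (xa t) (ys t) \<le> K * ps t"
        using KL bt False ps by auto
      moreover have "FS (xa t) (ys t) - FS (ya t) (ys t) \<le> K * pa t"
      proof (cases "xa t \<le> ya t")
        case True
        then show ?thesis using mono2[OF True, of "ys t"] K0 pa0 by (metis diff_le_0_iff_le mult_nonneg_nonneg order_trans)
      next
        case False
        then show ?thesis unfolding pa_def using KL bt by auto
      qed
      ultimately have "xs' t - ys' t \<le> K * ps t + K * pa t" using ps by linarith
      then have "ps t * (xs' t - ys' t) \<le> ps t * (K * ps t + K * pa t)" using ps0 by (rule mult_left_mono)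
      then show ?thesis by (simp add: algebra_simps power2_eq_square)
    qed
    have "2 * (pa t * ps t) \<le> (pa t)^2 + (ps t)^2" using sum_squares_bound[of "pa t" "ps t"] by simp
    then have "K * (2 * (pa t * ps t)) \<le> K * ((pa t)^2 + (ps t)^2)" using K0 by (rule mult_left_mono)
    then have "g' t \<le> 2 * (K * (pa t)^2 + K * (pa t * ps t)) + 2 * (K * (ps t)^2 + K * (pa t * ps t))"
      unfolding g'_def using c1 c2 by (simp add: algebra_simps)
    also have "\<dots> \<le> C * g t" unfolding C_def g_def using \<open>K * (2 * (pa t * ps t)) \<le> K * ((pa t)^2 + (ps t)^2)\<close>
      by (simp add: algebra_simps)
    finally show ?thesis .
  qed
  have contg: "continuous_on {tt..T} g"
  proof -
    have "continuous_on {tt..T} xa" "continuous_on {tt..T} xs" "continuous_on {tt..T} ya" "continuous_on {tt..T} ys"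
      using cxa cxs cya cys by (auto elim: continuous_on_subset)
    then show ?thesis unfolding g_def pa_def ps_def by (intro continuous_intros)
  qed
  have "h T \<le> h tt"
  proof (rule DERIV_nonpos_imp_decreasing_open[OF T])
    show "continuous_on {tt..T} h" unfolding h_def using contg by (intro continuous_intros)
    fix t assume t: "tt < t" "t < T"
    have "(h has_real_derivative (g' t - C * g t) * exp (- C * t)) (at t)"
      unfolding h_def by (auto intro!: derivative_eq_intros dg[OF t(1)] simp: algebra_simps)
    moreover have "(g' t - C * g t) * exp (- C * t) \<le> 0" using key[OF t] by (simp add: mult_nonpos_nonneg)
    ultimately show "\<exists>y. (h has_real_derivative y) (at t) \<and> y \<le> 0" by auto
  qed
  moreover have "h tt = 0" unfolding h_def g_def pa_def ps_def using inita inits by simp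
  ultimately have "g T * exp (- C * T) \<le> 0" unfolding h_def by simp
  then have "g T \<le> 0" by (simp add: mult_le_0_iff)
  moreover have "(pa T)^2 \<ge> 0" "(ps T)^2 \<ge> 0" by auto
  ultimately have "(pa T)^2 = 0" "(ps T)^2 = 0" unfolding g_def by linarith+
  then show ?thesis unfolding pa_def ps_def by auto
qed

lemma lip_le:
  fixes beta :: "real \<Rightarrow> real"
  assumes "L-lipschitz_on UNIV beta" "a \<le> a'"
  shows "beta a' - beta a \<le> L * (a' - a)"
proof -
  have "dist (beta a') (beta a) \<le> L * dist a' a" using assms(1) by (auto simp: lipschitz_on_def)
  then show ?thesis using assms(2) by (simp add: dist_real_def)
qed

lemma rhs_a_own:
  assumes "lam \<ge> 0" "sB > 0" "ea > 0" "q > 0" "L-lipschitz_on UNIV beta" "a \<le> a'"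
  shows "rhs_a lam q sB ea beta a' s - rhs_a lam q sB ea beta a s \<le> q * L * (a' - a)"
proof -
  have "\<bar>a\<bar>^3*a \<le> \<bar>a'\<bar>^3*a'" using p_mono assms by blast
  then have 1: "2*ea * sB*(\<bar>a\<bar>^3*a) \<le> 2*ea * sB*(\<bar>a'\<bar>^3*a')" using assms by (intro mult_left_mono) auto
  have 2: "q * (beta a' - beta a) \<le> q * (L * (a'-a))" using lip_le[OF assms(5,6)] assms by (intro mult_left_mono) auto
  have 3: "lam * (a' - a) \<ge> 0" using assms by auto
  show ?thesis using 1 2 3 unfolding rhs_a_def by (simp add: algebra_simps)
qed

lemma rhs_s_own:
  assumes "lam \<ge> 0" "sB > 0" "ea > 0" "q > 0" "L-lipschitz_on UNIV beta" "s \<le> s'"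
  shows "rhs_s lam q sB ea beta a s' - rhs_s lam q sB ea beta a s \<le> q * L * (s' - s)"
proof -
  have "\<bar>s\<bar>^3 * s \<le> \<bar>s'\<bar>^3 * s'" using p_mono assms by blast
  then have 1: "sB*(\<bar>s\<bar>^3 * s) \<le> sB*(\<bar>s'\<bar>^3 * s')" using assms by (intro mult_left_mono) auto
  have 2: "q * (beta s' - beta s) \<le> q * (L * (s'-s))" using lip_le[OF assms(5,6)] assms by (intro mult_left_mono) auto
  have 3: "lam * (s' - s) \<ge> 0" using assms by auto
  show ?thesis using 1 2 3 unfolding rhs_s_def by (simp add: algebra_simps)
qed

lemma rhs_a_cross:
  assumes "lam \<ge> 0" "sB > 0" "ea > 0" "\<bar>s\<bar> \<le> B" "\<bar>s'\<bar> \<le> B" "s \<le> s'"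
  shows "rhs_a lam q sB ea beta a s' - rhs_a lam q sB ea beta a s \<le> (lam + 4*ea * sB*\<bar>B\<bar>^3) * (s' - s)"
proof -
  have B: "\<bar>B\<bar> = B" using assms by auto
  have "\<bar>s'\<bar>^3 * s' - \<bar>s\<bar>^3 * s \<le> 4*B^3*(s'-s)" using p_lip assms by blast
  then have 1: "ea * sB*(\<bar>s'\<bar>^3 * s' - \<bar>s\<bar>^3 * s) \<le> ea * sB*(4*B^3*(s'-s))" using assms by (intro mult_left_mono) auto
  show ?thesis using 1 B unfolding rhs_a_def by (simp add: algebra_simps)
qed

lemma rhs_s_cross:
  assumes "lam \<ge> 0" "sB > 0" "ea > 0" "\<bar>a\<bar> \<le> B" "\<bar>a'\<bar> \<le> B" "a \<le> a'"
  shows "rhs_s lam q sB ea beta a' s - rhs_s lam q sB ea beta a s \<le> (lam + 4*ea * sB*\<bar>B\<bar>^3) * (a' - a)"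
proof -
  have B: "\<bar>B\<bar> = B" using assms by auto
  have "\<bar>a'\<bar>^3*a' - \<bar>a\<bar>^3*a \<le> 4*B^3*(a'-a)" using p_lip assms by blast
  then have 1: "ea * sB*(\<bar>a'\<bar>^3*a' - \<bar>a\<bar>^3*a) \<le> ea * sB*(4*B^3*(a'-a))" using assms by (intro mult_left_mono) auto
  show ?thesis using 1 B unfolding rhs_s_def by (simp add: algebra_simps)
qed

lemma rhs_a_mono:
  assumes "lam \<ge> 0" "sB > 0" "ea > 0" "s \<le> s'"
  shows "rhs_a lam q sB ea beta a s \<le> rhs_a lam q sB ea beta a s'"
proof -
  have "\<bar>s\<bar>^3 * s \<le> \<bar>s'\<bar>^3 * s'" using p_mono assms by blast
  then have 1: "ea * sB*(\<bar>s\<bar>^3 * s) \<le> ea * sB*(\<bar>s'\<bar>^3 * s')" using assms by (intro mult_left_mono) auto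
  have 3: "lam * s \<le> lam * s'" using assms by (intro mult_left_mono) auto
  show ?thesis using 1 3 unfolding rhs_a_def by (simp add: algebra_simps)
qed

lemma rhs_s_mono:
  assumes "lam \<ge> 0" "sB > 0" "ea > 0" "a \<le> a'"
  shows "rhs_s lam q sB ea beta a s \<le> rhs_s lam q sB ea beta a' s"
proof -
  have "\<bar>a\<bar>^3*a \<le> \<bar>a'\<bar>^3*a'" using p_mono assms by blast
  then have 1: "ea * sB*(\<bar>a\<bar>^3*a) \<le> ea * sB*(\<bar>a'\<bar>^3*a')" using assms by (intro mult_left_mono) auto
  have 3: "lam * a \<le> lam * a'" using assms by (intro mult_left_mono) auto
  show ?thesis using 1 3 unfolding rhs_s_def by (simp add: algebra_simps)
qed

lemma big_m:
  fixes c A Bc X :: real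
  assumes "c > 0" "A \<ge> 0" "Bc \<ge> 0"
  shows "\<exists>m\<ge>1. m \<ge> X \<and> A*m + Bc \<le> c*m^4"
proof -
  define m where "m = max 1 (max X ((A+Bc)/c))"
  have m1: "m \<ge> 1" and mX: "m \<ge> X" and mc: "m \<ge> (A+Bc)/c" unfolding m_def by auto
  have "c*m \<ge> A + Bc" using mc assms by (simp add: field_simps)
  then have "(A+Bc)*m \<le> (c*m)*m" using m1 by (intro mult_right_mono) auto
  moreover have "m*m \<le> m^4"
  proof -
    have "m^2 \<le> m^4" using m1 by (intro power_increasing) auto
    then show ?thesis by (simp add: power2_eq_square)
  qed
  then have "c*(m*m) \<le> c*m^4" using assms by (intro mult_left_mono) auto
  moreover have "A*m + Bc \<le> (A+Bc)*m" using m1 assms by (simp add: algebra_simps) (metis mult_left_mono mult.right_neutral)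
  ultimately have "A*m + Bc \<le> c*m^4" by (simp add: algebra_simps)
  then show ?thesis using m1 mX by blast
qed

lemma shift_deriv_nonneg:
  fixes xa xs u v :: "real \<Rightarrow> real"
  assumes dxa: "\<And>t. t > 0 \<Longrightarrow> (xa has_real_derivative u t) (at t)"
    and dxs: "\<And>t. t > 0 \<Longrightarrow> (xs has_real_derivative v t) (at t)"
    and cmp: "\<And>ta h T. 0 < ta \<Longrightarrow> 0 < h \<Longrightarrow> xa ta \<le> xa (ta+h) \<Longrightarrow> xs ta \<le> xs (ta+h) \<Longrightarrow> ta \<le> T
               \<Longrightarrow> xa T \<le> xa (T+h) \<and> xs T \<le> xs (T+h)"
    and ta: "ta > 0" "u ta > 0" "v ta > 0"
    and t: "t > ta"
  shows "u t \<ge> 0 \<and> v t \<ge> 0"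
proof -
  obtain d1 where d1: "d1 > 0" "\<And>h. h > 0 \<Longrightarrow> h < d1 \<Longrightarrow> xa ta < xa (ta + h)"
    using DERIV_pos_inc_right[OF dxa[OF ta(1)] ta(2)] by blast
  obtain d2 where d2: "d2 > 0" "\<And>h. h > 0 \<Longrightarrow> h < d2 \<Longrightarrow> xs ta < xs (ta + h)"
    using DERIV_pos_inc_right[OF dxs[OF ta(1)] ta(3)] by blast
  define d where "d = min d1 d2"
  have d0: "d > 0" using d1 d2 unfolding d_def by auto
  have sh: "xa T \<le> xa (T+h) \<and> xs T \<le> xs (T+h)" if "0 < h" "h < d" "ta \<le> T" for h T
  proof (rule cmp[OF ta(1) that(1) _ _ that(3)])
    show "xa ta \<le> xa (ta + h)" using d1(2)[of h] that unfolding d_def by fastforce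
    show "xs ta \<le> xs (ta + h)" using d2(2)[of h] that unfolding d_def by fastforce
  qed
  have t0: "t > 0" using t ta by auto
  have "u t \<ge> 0"
  proof (rule ccontr)
    assume "\<not> u t \<ge> 0"
    then have "u t < 0" by simp
    then obtain e where e: "e > 0" "\<And>h. h > 0 \<Longrightarrow> h < e \<Longrightarrow> xa t > xa (t + h)"
      using DERIV_neg_dec_right[OF dxa[OF t0]] by blast
    define h where "h = min e d / 2"
    have "h > 0" "h < e" "h < d" unfolding h_def using e d0 by auto
    then show False using e(2)[of h] sh[of h t] t by force
  qed
  moreover have "v t \<ge> 0"
  proof (rule ccontr)
    assume "\<not> v t \<ge> 0"
    then have "v t < 0" by simp
    then obtain e where e: "e > 0" "\<And>h. h > 0 \<Longrightarrow> h < e \<Longrightarrow> xs t > xs (t + h)"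
      using DERIV_neg_dec_right[OF dxs[OF t0]] by blast
    define h where "h = min e d / 2"
    have "h > 0" "h < e" "h < d" unfolding h_def using e d0 by auto
    then show False using e(2)[of h] sh[of h t] t by force
  qed
  ultimately show ?thesis by blast
qed

lemma mono_from_sign:
  fixes f f' :: "real \<Rightarrow> real"
  assumes "continuous_on {0..} f" "\<And>t. t > 0 \<Longrightarrow> (f has_real_derivative f' t) (at t)" "t1 \<ge> 0"
    "\<And>t. t > t1 \<Longrightarrow> f' t \<ge> 0"
  shows "\<forall>a b. t1 \<le> a \<longrightarrow> a \<le> b \<longrightarrow> f a \<le> f b"
proof (intro allI impI)
  fix a b assume ab: "t1 \<le> a" "a \<le> b"
  show "f a \<le> f b"
  proof (rule incr_from_deriv[of t1 f f' a b])
    show "continuous_on {t1..} f" using assms(1) by (rule continuous_on_subset) (use assms(3) in auto)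
    show "(f has_real_derivative f' t) (at t)" if "t > t1" for t using assms(2) that assms(3) by auto
  qed (use assms ab in auto)
qed

lemma mono_from_sign_dec:
  fixes f f' :: "real \<Rightarrow> real"
  assumes "continuous_on {0..} f" "\<And>t. t > 0 \<Longrightarrow> (f has_real_derivative f' t) (at t)" "t1 \<ge> 0"
    "\<And>t. t > t1 \<Longrightarrow> f' t \<le> 0"
  shows "\<forall>a b. t1 \<le> a \<longrightarrow> a \<le> b \<longrightarrow> f b \<le> f a"
proof -
  have "\<forall>a b. t1 \<le> a \<longrightarrow> a \<le> b \<longrightarrow> - f a \<le> - f b"
  proof (rule mono_from_sign[where f'="\<lambda>t. - f' t"])
    show "continuous_on {0..} (\<lambda>t. - f t)" using assms(1) by (intro continuous_intros)
    show "((\<lambda>t. - f t) has_real_derivative - f' t) (at t)" if "t > 0" for t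
      using assms(2)[OF that] by (rule DERIV_minus)
  qed (use assms in auto)
  then show ?thesis by auto
qed

lemma mono_conv:
  fixes f :: "real \<Rightarrow> real"
  assumes "t1 \<ge> 0" "(\<forall>a b. t1 \<le> a \<longrightarrow> a \<le> b \<longrightarrow> f a \<le> f b) \<or> (\<forall>a b. t1 \<le> a \<longrightarrow> a \<le> b \<longrightarrow> f b \<le> f a)"
    "\<And>t. t \<ge> 0 \<Longrightarrow> 0 \<le> f t \<and> f t \<le> M"
  shows "\<exists>l. (f \<longlongrightarrow> l) at_top"
  using assms(2)
proof
  assume "\<forall>a b. t1 \<le> a \<longrightarrow> a \<le> b \<longrightarrow> f a \<le> f b"
  then show ?thesis by (intro incr_bounded_tendsto[of t1 f M]) (use assms in auto)
next
  assume "\<forall>a b. t1 \<le> a \<longrightarrow> a \<le> b \<longrightarrow> f b \<le> f a"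
  then show ?thesis by (intro decr_bounded_tendsto[of t1 f 0]) (use assms in auto)
qed

lemma div_bound:
  fixes X c d M g g' :: real
  assumes "X \<le> c*d" "0 \<le> c" "c \<le> M" "0 \<le> d" "g > 0" "g' > 0"
  shows "X/g \<le> (M*(1/g+1/g'))*d"
proof -
  have "X/g \<le> (c*d)/g" using assms by (intro divide_right_mono) auto
  also have "\<dots> \<le> (M*d)/g" using assms by (intro divide_right_mono mult_right_mono) auto
  also have "\<dots> \<le> (M*d)/g + (M*d)/g'" using assms by auto
  also have "\<dots> = (M*(1/g+1/g'))*d" by (simp add: field_simps)
  finally show ?thesis .
qed

theorem proposition2p2:
  fixes gamma_a gamma_s lam q sB ea Ta0 Ts0 :: real
    and betaa betas Ta Ts :: "real \<Rightarrow> real"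
  assumes "gamma_a > 0" and "gamma_s > 0" and "lam \<ge> 0" and "q > 0" and "sB > 0"
    and "0 < ea" and "ea < 2"
    and "\<exists>L. L-lipschitz_on UNIV betaa" and "\<exists>L. L-lipschitz_on UNIV betas"
    and "\<And>x. betaa x \<ge> 0" and "\<And>x. betas x > 0"
    and "Ta0 \<ge> 0" and "Ts0 \<ge> 0"
    and "Ta 0 = Ta0" and "Ts 0 = Ts0"
    and "\<And>t. t \<ge> 0 \<Longrightarrow>
           (Ta has_real_derivative (rhs_a lam q sB ea betaa (Ta t) (Ts t) / gamma_a)) (at t within {0..})"
    and "\<And>t. t \<ge> 0 \<Longrightarrow>
           (Ts has_real_derivative (rhs_s lam q sB ea betas (Ta t) (Ts t) / gamma_s)) (at t within {0..})"
  shows "\<exists>a s. rhs_a lam q sB ea betaa a s = 0 \<and> rhs_s lam q sB ea betas a s = 0 \<and>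
               (Ta \<longlongrightarrow> a) at_top \<and> (Ts \<longlongrightarrow> s) at_top"
proof -
  note ga = assms(1) and gs = assms(2) and lam = assms(3) and q = assms(4) and sB = assms(5)
    and ea = assms(6) and ea2 = assms(7) and bA0 = assms(10) and bS0 = assms(11)
    and Ta0 = assms(12) and Ts0 = assms(13) and iTa = assms(14) and iTs = assms(15)
    and wTa = assms(16) and wTs = assms(17)
  define FA where "FA a s = rhs_a lam q sB ea betaa a s / gamma_a" for a s
  define FS where "FS a s = rhs_s lam q sB ea betas a s / gamma_s" for a s
  obtain La where La: "La-lipschitz_on UNIV betaa" using assms(8) by blast
  obtain Ls where Ls: "Ls-lipschitz_on UNIV betas" using assms(9) by blast
  have La0: "La \<ge> 0" using La by (rule lipschitz_on_nonneg)
  have Ls0: "Ls \<ge> 0" using Ls by (rule lipschitz_on_nonneg)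
  have contA: "isCont betaa x" for x
    using lipschitz_on_continuous_on[OF La] by (simp add: continuous_on_eq_continuous_at)
  have contS: "isCont betas x" for x
    using lipschitz_on_continuous_on[OF Ls] by (simp add: continuous_on_eq_continuous_at)
  have monoA: "FA a s \<le> FA a s'" if "s \<le> s'" for a s s'
    unfolding FA_def using rhs_a_mono[OF lam sB ea that] ga by (intro divide_right_mono) auto
  have monoS: "FS a s \<le> FS a' s" if "a \<le> a'" for a a' s
    unfolding FS_def using rhs_s_mono[OF lam sB ea that] gs by (intro divide_right_mono) auto
  have lipF: "\<exists>K\<ge>0. \<forall>a a' s s'. \<bar>a\<bar> \<le> B \<longrightarrow> \<bar>a'\<bar> \<le> B \<longrightarrow> \<bar>s\<bar> \<le> B \<longrightarrow> \<bar>s'\<bar> \<le> B \<longrightarrow> a \<le> a' \<longrightarrow> s \<le> s' \<longrightarrow>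
         FA a' s - FA a s \<le> K*(a'-a) \<and> FA a s' - FA a s \<le> K*(s'-s) \<and>
         FS a' s - FS a s \<le> K*(a'-a) \<and> FS a s' - FS a s \<le> K*(s'-s)" for B
  proof -
    define M where "M = q*La + q*Ls + lam + 4*ea * sB*\<bar>B\<bar>^3"
    have M1: "q*La \<le> M" "q*Ls \<le> M" "lam + 4*ea * sB*\<bar>B\<bar>^3 \<le> M" "0 \<le> lam + 4*ea * sB*\<bar>B\<bar>^3"
      unfolding M_def using q La0 Ls0 lam ea sB by auto
    have qLa: "0 \<le> q*La" "0 \<le> q*Ls" using q La0 Ls0 by auto
    define K where "K = M*(1/gamma_a+1/gamma_s)"
    have K': "K = M*(1/gamma_s+1/gamma_a)" unfolding K_def by simp
    have M0: "M \<ge> 0" using M1 by linarith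
    have "1/gamma_a+1/gamma_s \<ge> 0" using ga gs by simp
    then have K0: "K \<ge> 0" unfolding K_def using M0 by (rule mult_nonneg_nonneg[rotated])
    have all: "FA a' s - FA a s \<le> K*(a'-a) \<and> FA a s' - FA a s \<le> K*(s'-s) \<and>
         FS a' s - FS a s \<le> K*(a'-a) \<and> FS a s' - FS a s \<le> K*(s'-s)"
      if h: "\<bar>a\<bar> \<le> B" "\<bar>a'\<bar> \<le> B" "\<bar>s\<bar> \<le> B" "\<bar>s'\<bar> \<le> B" "a \<le> a'" "s \<le> s'" for a a' s s'
    proof -
      have 1: "FA a' s - FA a s \<le> K*(a'-a)"
      proof -
        have "FA a' s - FA a s = (rhs_a lam q sB ea betaa a' s - rhs_a lam q sB ea betaa a s) / gamma_a"
          unfolding FA_def by (simp add: diff_divide_distrib)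
        also have "\<dots> \<le> K*(a'-a)" unfolding K_def
          using rhs_a_own[OF lam sB ea q La h(5), of s] qLa M1 h ga gs
          by (intro div_bound[where c="q*La"]) auto
        finally show ?thesis .
      qed
      have 2: "FA a s' - FA a s \<le> K*(s'-s)"
      proof -
        have "FA a s' - FA a s = (rhs_a lam q sB ea betaa a s' - rhs_a lam q sB ea betaa a s) / gamma_a"
          unfolding FA_def by (simp add: diff_divide_distrib)
        also have "\<dots> \<le> K*(s'-s)" unfolding K_def
          using rhs_a_cross[OF lam sB ea h(3,4,6), of q betaa a] M1 h ga gs
          by (intro div_bound[where c="lam + 4*ea * sB*\<bar>B\<bar>^3"]) auto
        finally show ?thesis .
      qed
      have 3: "FS a' s - FS a s \<le> K*(a'-a)"
      proof -
        have "FS a' s - FS a s = (rhs_s lam q sB ea betas a' s - rhs_s lam q sB ea betas a s) / gamma_s"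
          unfolding FS_def by (simp add: diff_divide_distrib)
        also have "\<dots> \<le> K*(a'-a)" unfolding K'
          using rhs_s_cross[OF lam sB ea h(1,2,5), of q betas s] M1 h ga gs
          by (intro div_bound[where c="lam + 4*ea * sB*\<bar>B\<bar>^3"]) auto
        finally show ?thesis .
      qed
      have 4: "FS a s' - FS a s \<le> K*(s'-s)"
      proof -
        have "FS a s' - FS a s = (rhs_s lam q sB ea betas a s' - rhs_s lam q sB ea betas a s) / gamma_s"
          unfolding FS_def by (simp add: diff_divide_distrib)
        also have "\<dots> \<le> K*(s'-s)" unfolding K'
          using rhs_s_own[OF lam sB ea q Ls h(6), of a] qLa M1 h ga gs
          by (intro div_bound[where c="q*Ls"]) auto
        finally show ?thesis .
      qed
      show ?thesis using 1 2 3 4 by blast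
    qed
    show ?thesis
      apply (rule exI[of _ K])
      apply (rule conjI[OF K0])
      apply (intro allI impI)
      apply (rule all)
           apply assumption+
      done
  qed
  note cmp = comparison[OF monoA monoS lipF]
  have dTa: "(Ta has_real_derivative FA (Ta t) (Ts t)) (at t)" if "t > 0" for t
  proof -
    have "(Ta has_real_derivative FA (Ta t) (Ts t)) (at t within {0<..})"
    proof -
      have w: "(Ta has_real_derivative FA (Ta t) (Ts t)) (at t within {0..})" using wTa[of t] that unfolding FA_def by auto
      show ?thesis by (rule has_field_derivative_subset[OF w]) auto
    qed
    moreover have "at t within {0<..} = at t" by (rule at_within_open) (use that in auto)
    ultimately show ?thesis by simp
  qed
  have dTs: "(Ts has_real_derivative FS (Ta t) (Ts t)) (at t)" if "t > 0" for t
  proof -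
    have "(Ts has_real_derivative FS (Ta t) (Ts t)) (at t within {0<..})"
    proof -
      have w: "(Ts has_real_derivative FS (Ta t) (Ts t)) (at t within {0..})" using wTs[of t] that unfolding FS_def by auto
      show ?thesis by (rule has_field_derivative_subset[OF w]) auto
    qed
    moreover have "at t within {0<..} = at t" by (rule at_within_open) (use that in auto)
    ultimately show ?thesis by simp
  qed
  have cTa: "continuous_on {0..} Ta"
    unfolding continuous_on_eq_continuous_within
  proof
    fix x :: real assume "x \<in> {0..}"
    then show "continuous (at x within {0..}) Ta" using DERIV_continuous[OF wTa[of x]] by auto
  qed
  have cTs: "continuous_on {0..} Ts"
    unfolding continuous_on_eq_continuous_within
  proof
    fix x :: real assume "x \<in> {0..}"
    then show "continuous (at x within {0..}) Ts" using DERIV_continuous[OF wTs[of x]] by auto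
  qed

  define u where "u t = FA (Ta t) (Ts t)" for t
  define v where "v t = FS (Ta t) (Ts t)" for t
  have dTa': "(Ta has_real_derivative u t) (at t)" if "t > 0" for t using dTa[OF that] unfolding u_def .
  have dTs': "(Ts has_real_derivative v t) (at t)" if "t > 0" for t using dTs[OF that] unfolding v_def .
  have low: "0 \<le> Ta T \<and> 0 \<le> Ts T" if "T \<ge> 0" for T
  proof -
    have "(\<lambda>_. 0) T \<le> Ta T \<and> (\<lambda>_. 0) T \<le> Ts T"
    proof (rule cmp[where xa="\<lambda>_. 0" and xs="\<lambda>_. 0" and ya=Ta and ys=Ts and T=T and xa'="\<lambda>_. 0" and xs'="\<lambda>_. 0" and ya'=u and ys'=v and tt=0])
      show "continuous_on {0..} (\<lambda>_::real. 0::real)" by simp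
      show "continuous_on {0..} (\<lambda>_::real. 0::real)" by simp
      show "continuous_on {0..} Ta" by (rule cTa)
      show "continuous_on {0..} Ts" by (rule cTs)
      show "((\<lambda>_. 0) has_real_derivative 0) (at t)" for t by simp
      show "((\<lambda>_. 0) has_real_derivative 0) (at t)" for t by simp
      show "(Ta has_real_derivative u t) (at t)" if "t > 0" for t using dTa'[OF that] .
      show "(Ts has_real_derivative v t) (at t)" if "t > 0" for t using dTs'[OF that] .
      show "0 \<le> FA 0 0" unfolding FA_def rhs_a_def using bA0[of 0] q ga by simp
      show "0 \<le> FS 0 0" unfolding FS_def rhs_s_def using bS0[of 0] q gs by simp
      show "FA (Ta t) (Ts t) \<le> u t" for t unfolding u_def by simp
      show "FS (Ta t) (Ts t) \<le> v t" for t unfolding v_def by simp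
      show "0 \<le> Ta 0" "0 \<le> Ts 0" using iTa iTs Ta0 Ts0 by auto
    qed (use that in auto)
    then show ?thesis by simp
  qed

  obtain k where k: "k > 0" "k^4 = (ea+2)/2"
  proof -
    have "root 4 ((ea+2)/2) > 0" using ea by (intro real_root_gt_zero) auto
    moreover have "(root 4 ((ea+2)/2))^4 = (ea+2)/2" using ea by (intro real_root_pow_pos2) auto
    ultimately show ?thesis using that by blast
  qed
  define c where "c = min (ea * sB*(2 - k^4)) (sB*(k^4 - ea))"
  have c0: "c > 0" unfolding c_def using k ea ea2 sB by auto
  have cle: "c \<le> ea * sB*(2 - k^4)" "c \<le> sB*(k^4 - ea)" unfolding c_def by auto
  define A where "A = lam*k + q*La + lam + q*Ls*k"
  define Bc where "Bc = q*betaa 0 + q*betas 0"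
  have A0: "A \<ge> 0" unfolding A_def using lam k q La0 Ls0 by auto
  have Bc0: "Bc \<ge> 0" unfolding Bc_def using q bA0[of 0] bS0[of 0] by auto
  obtain m where m: "m \<ge> 1" "m \<ge> max Ta0 (Ts0/k)" "A*m + Bc \<le> c*m^4"
    using big_m[OF c0 A0 Bc0] by blast
  define P where "P = m^4"
  have P0: "P \<ge> 0" unfolding P_def by simp
  have pm: "\<bar>m\<bar>^3*m = P" unfolding P_def using m(1) by (simp add: power3_eq_cube power4_eq_xxxx)
  have pkm: "\<bar>k*m\<bar>^3*(k*m) = k^4*P" unfolding P_def using m(1) k(1)
    by (simp add: power3_eq_cube power4_eq_xxxx abs_mult mult_ac)
  have nn: "lam*m \<ge> 0" "lam*k*m \<ge> 0" "q*La*m \<ge> 0" "q*Ls*k*m \<ge> 0" "q*betaa 0 \<ge> 0" "q*betas 0 \<ge> 0"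
    using lam m(1) k(1) q La0 Ls0 bA0[of 0] bS0[of 0] by auto
  have Am: "A*m = lam*k*m + q*La*m + lam*m + q*Ls*k*m" unfolding A_def by (simp add: algebra_simps)
  have ra: "rhs_a lam q sB ea betaa m (k*m) \<le> 0"
  proof -
    have e: "rhs_a lam q sB ea betaa m (k*m) = (lam*k*m - lam*m) + q*betaa m - ea * sB*(2-k^4)*P"
    proof -
      have "rhs_a lam q sB ea betaa m (k*m) = -lam*(m-k*m) + ea * sB*(\<bar>k*m\<bar>^3*(k*m)) - 2*ea * sB*(\<bar>m\<bar>^3*m) + q*betaa m"
        unfolding rhs_a_def by (simp add: mult.assoc)
      also have "\<dots> = -lam*(m-k*m) + ea * sB*(k^4*P) - 2*ea * sB*P + q*betaa m" using pm pkm by simp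
      also have "\<dots> = (lam*k*m - lam*m) + q*betaa m - ea * sB*(2-k^4)*P" by (simp add: algebra_simps)
      finally show ?thesis .
    qed
    have h2: "q*betaa m \<le> q*betaa 0 + q*La*m"
    proof -
      have "betaa m - betaa 0 \<le> La * (m - 0)" using lip_le[OF La, of 0 m] m(1) by auto
      then have "q*(betaa m - betaa 0) \<le> q*(La*m)" using q by (intro mult_left_mono) auto
      then show ?thesis by (simp add: algebra_simps)
    qed
    have h3: "c*P \<le> ea * sB*(2-k^4)*P" using cle(1) P0 by (rule mult_right_mono)
    have "c*m^4 = c*P" unfolding P_def ..
    then show ?thesis using e h2 h3 Am m(3) nn unfolding Bc_def by linarith
  qed
  have rs: "rhs_s lam q sB ea betas m (k*m) \<le> 0"
  proof -
    have e: "rhs_s lam q sB ea betas m (k*m) = (lam*m - lam*k*m) + q*betas (k*m) - sB*(k^4-ea)*P"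
    proof -
      have "rhs_s lam q sB ea betas m (k*m) = -lam*(k*m-m) - sB*(\<bar>k*m\<bar>^3*(k*m)) + ea * sB*(\<bar>m\<bar>^3*m) + q*betas (k*m)"
        unfolding rhs_s_def by (simp add: mult.assoc)
      also have "\<dots> = -lam*(k*m-m) - sB*(k^4*P) + ea * sB*P + q*betas (k*m)" using pm pkm by simp
      also have "\<dots> = (lam*m - lam*k*m) + q*betas (k*m) - sB*(k^4-ea)*P" by (simp add: algebra_simps)
      finally show ?thesis .
    qed
    have h2: "q*betas (k*m) \<le> q*betas 0 + q*Ls*k*m"
    proof -
      have "betas (k*m) - betas 0 \<le> Ls * (k*m - 0)" using lip_le[OF Ls, of 0 "k*m"] m(1) k(1) by auto
      then have "q*(betas (k*m) - betas 0) \<le> q*(Ls*(k*m))" using q by (intro mult_left_mono) auto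
      then show ?thesis by (simp add: algebra_simps)
    qed
    have h3: "c*P \<le> sB*(k^4-ea)*P" using cle(2) P0 by (rule mult_right_mono)
    have "c*m^4 = c*P" unfolding P_def ..
    then show ?thesis using e h2 h3 Am m(3) nn unfolding Bc_def by linarith
  qed
  have FAm: "FA m (k*m) \<le> 0" unfolding FA_def using ra ga by (simp add: divide_nonpos_pos)
  have FSm: "FS m (k*m) \<le> 0" unfolding FS_def using rs gs by (simp add: divide_nonpos_pos)
  have up: "Ta T \<le> m \<and> Ts T \<le> k*m" if "T \<ge> 0" for T
  proof -
    have "Ta T \<le> (\<lambda>_. m) T \<and> Ts T \<le> (\<lambda>_. k*m) T"
    proof (rule cmp[where xa=Ta and xs=Ts and ya="\<lambda>_. m" and ys="\<lambda>_. k*m" and T=T and xa'=u and xs'=v and ya'="\<lambda>_. 0" and ys'="\<lambda>_. 0" and tt=0])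
      show "continuous_on {0..} (\<lambda>_::real. m)" by simp
      show "continuous_on {0..} (\<lambda>_::real. k*m)" by simp
      show "continuous_on {0..} Ta" by (rule cTa)
      show "continuous_on {0..} Ts" by (rule cTs)
      show "((\<lambda>_. m) has_real_derivative 0) (at t)" for t by simp
      show "((\<lambda>_. k*m) has_real_derivative 0) (at t)" for t by simp
      show "(Ta has_real_derivative u t) (at t)" if "t > 0" for t using dTa'[OF that] .
      show "(Ts has_real_derivative v t) (at t)" if "t > 0" for t using dTs'[OF that] .
      show "FA m (k*m) \<le> 0" by (rule FAm)
      show "FS m (k*m) \<le> 0" by (rule FSm)
      show "u t \<le> FA (Ta t) (Ts t)" for t unfolding u_def by simp
      show "v t \<le> FS (Ta t) (Ts t)" for t unfolding v_def by simp
      show "Ta 0 \<le> m" using iTa m(2) by auto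
      have "Ts0/k \<le> m" using m(2) by auto
      then have "Ts0 \<le> k*m" using k(1) by (simp add: pos_divide_le_eq mult.commute)
      then show "Ts 0 \<le> k*m" using iTs by simp
    qed (use that in auto)
    then show ?thesis by simp
  qed
  have bndA: "0 \<le> Ta t \<and> Ta t \<le> m" if "t \<ge> 0" for t using low[OF that] up[OF that] by auto
  have bndS: "0 \<le> Ts t \<and> Ts t \<le> k*m" if "t \<ge> 0" for t using low[OF that] up[OF that] by auto

  have dshA: "((\<lambda>t. Ta (t+h)) has_real_derivative u (t+h)) (at t)" if "t > 0" "h \<ge> 0" for t h
    using dTa'[of "t+h"] that DERIV_shift[of Ta "u (t+h)" t h] by auto
  have dshS: "((\<lambda>t. Ts (t+h)) has_real_derivative v (t+h)) (at t)" if "t > 0" "h \<ge> 0" for t h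
    using dTs'[of "t+h"] that DERIV_shift[of Ts "v (t+h)" t h] by auto
  have cshA: "continuous_on {ta..} (\<lambda>t. Ta (t+h))" if "ta > 0" "h \<ge> 0" for ta h
    by (rule cont_from_deriv[of 0 _ "\<lambda>t. u (t+h)"]) (use dshA that in auto)
  have cshS: "continuous_on {ta..} (\<lambda>t. Ts (t+h))" if "ta > 0" "h \<ge> 0" for ta h
    by (rule cont_from_deriv[of 0 _ "\<lambda>t. v (t+h)"]) (use dshS that in auto)
  have cTa': "continuous_on {ta..} Ta" if "ta \<ge> 0" for ta using cTa by (rule continuous_on_subset) (use that in auto)
  have cTs': "continuous_on {ta..} Ts" if "ta \<ge> 0" for ta using cTs by (rule continuous_on_subset) (use that in auto)
  have cmpUp: "Ta T \<le> Ta (T+h) \<and> Ts T \<le> Ts (T+h)"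
    if "0 < ta" "0 < h" "Ta ta \<le> Ta (ta+h)" "Ts ta \<le> Ts (ta+h)" "ta \<le> T" for ta h T
  proof (rule cmp[where xa=Ta and xs=Ts and ya="\<lambda>t. Ta (t+h)" and ys="\<lambda>t. Ts (t+h)" and T=T and xa'=u and xs'=v
        and ya'="\<lambda>t. u (t+h)" and ys'="\<lambda>t. v (t+h)" and tt=ta])
    show "continuous_on {ta..} Ta" "continuous_on {ta..} Ts" using cTa' cTs' that by auto
    show "continuous_on {ta..} (\<lambda>t. Ta (t+h))" "continuous_on {ta..} (\<lambda>t. Ts (t+h))" using cshA cshS that by auto
    show "(Ta has_real_derivative u t) (at t)" if "t > ta" for t using dTa' that \<open>0 < ta\<close> by auto
    show "(Ts has_real_derivative v t) (at t)" if "t > ta" for t using dTs' that \<open>0 < ta\<close> by auto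
    show "((\<lambda>t. Ta (t+h)) has_real_derivative u (t+h)) (at t)" if "t > ta" for t using dshA that \<open>0 < ta\<close> \<open>0 < h\<close> by auto
    show "((\<lambda>t. Ts (t+h)) has_real_derivative v (t+h)) (at t)" if "t > ta" for t using dshS that \<open>0 < ta\<close> \<open>0 < h\<close> by auto
  qed (use that in \<open>auto simp: u_def v_def\<close>)
  have cmpDown: "Ta (T+h) \<le> Ta T \<and> Ts (T+h) \<le> Ts T"
    if "0 < ta" "0 < h" "Ta (ta+h) \<le> Ta ta" "Ts (ta+h) \<le> Ts ta" "ta \<le> T" for ta h T
  proof (rule cmp[where ya=Ta and ys=Ts and xa="\<lambda>t. Ta (t+h)" and xs="\<lambda>t. Ts (t+h)" and T=T and ya'=u and ys'=v
        and xa'="\<lambda>t. u (t+h)" and xs'="\<lambda>t. v (t+h)" and tt=ta])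
    show "continuous_on {ta..} Ta" "continuous_on {ta..} Ts" using cTa' cTs' that by auto
    show "continuous_on {ta..} (\<lambda>t. Ta (t+h))" "continuous_on {ta..} (\<lambda>t. Ts (t+h))" using cshA cshS that by auto
    show "(Ta has_real_derivative u t) (at t)" if "t > ta" for t using dTa' that \<open>0 < ta\<close> by auto
    show "(Ts has_real_derivative v t) (at t)" if "t > ta" for t using dTs' that \<open>0 < ta\<close> by auto
    show "((\<lambda>t. Ta (t+h)) has_real_derivative u (t+h)) (at t)" if "t > ta" for t using dshA that \<open>0 < ta\<close> \<open>0 < h\<close> by auto
    show "((\<lambda>t. Ts (t+h)) has_real_derivative v (t+h)) (at t)" if "t > ta" for t using dshS that \<open>0 < ta\<close> \<open>0 < h\<close> by auto
  qed (use that in \<open>auto simp: u_def v_def\<close>)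

  have icTa: "isCont Ta t" if "t > 0" for t using DERIV_continuous[OF dTa'[OF that]] .
  have icTs: "isCont Ts t" if "t > 0" for t using DERIV_continuous[OF dTs'[OF that]] .
  have icu: "isCont u t" if "t > 0" for t
    unfolding u_def FA_def rhs_a_def
    by (intro continuous_intros isCont_o2[OF icTa[OF that] contA] icTa[OF that] icTs[OF that]) (use ga in auto)
  have icv: "isCont v t" if "t > 0" for t
    unfolding v_def FS_def rhs_s_def
    by (intro continuous_intros isCont_o2[OF icTs[OF that] contS] icTa[OF that] icTs[OF that]) (use gs in auto)
  define MonoA where "MonoA t1 \<longleftrightarrow> (\<forall>a b. t1 \<le> a \<longrightarrow> a \<le> b \<longrightarrow> Ta a \<le> Ta b) \<or> (\<forall>a b. t1 \<le> a \<longrightarrow> a \<le> b \<longrightarrow> Ta b \<le> Ta a)" for t1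
  define MonoS where "MonoS t1 \<longleftrightarrow> (\<forall>a b. t1 \<le> a \<longrightarrow> a \<le> b \<longrightarrow> Ts a \<le> Ts b) \<or> (\<forall>a b. t1 \<le> a \<longrightarrow> a \<le> b \<longrightarrow> Ts b \<le> Ts a)" for t1
  have mono_both: "\<exists>t1\<ge>0. MonoA t1 \<and> MonoS t1"
  proof (cases "\<exists>ta>0. u ta > 0 \<and> v ta > 0")
    case True
    then obtain ta where ta: "ta > 0" "u ta > 0" "v ta > 0" by blast
    have sg: "u t \<ge> 0 \<and> v t \<ge> 0" if "t > ta" for t
      by (rule shift_deriv_nonneg[OF dTa' dTs' cmpUp ta(1) ta(2) ta(3) that])
    have "\<forall>a b. ta \<le> a \<longrightarrow> a \<le> b \<longrightarrow> Ta a \<le> Ta b"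
      by (rule mono_from_sign[OF cTa dTa']) (use ta sg in auto)
    moreover have "\<forall>a b. ta \<le> a \<longrightarrow> a \<le> b \<longrightarrow> Ts a \<le> Ts b"
      by (rule mono_from_sign[OF cTs dTs']) (use ta sg in auto)
    ultimately show ?thesis unfolding MonoA_def MonoS_def using ta(1) by (intro exI[of _ ta]) auto
  next
    case notA: False
    show ?thesis
    proof (cases "\<exists>ta>0. u ta < 0 \<and> v ta < 0")
      case True
      then obtain ta where ta: "ta > 0" "u ta < 0" "v ta < 0" by blast
      have sg: "- u t \<ge> 0 \<and> - v t \<ge> 0" if "t > ta" for t
      proof (rule shift_deriv_nonneg[where xa="\<lambda>t. - Ta t" and xs="\<lambda>t. - Ts t" and u="\<lambda>t. - u t" and v="\<lambda>t. - v t" and ta=ta])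
        show "((\<lambda>t. - Ta t) has_real_derivative - u t) (at t)" if "t > 0" for t using dTa'[OF that] by (rule DERIV_minus)
        show "((\<lambda>t. - Ts t) has_real_derivative - v t) (at t)" if "t > 0" for t using dTs'[OF that] by (rule DERIV_minus)
        show "- Ta T \<le> - Ta (T + h) \<and> - Ts T \<le> - Ts (T + h)"
          if "0 < ta'" "0 < h" "- Ta ta' \<le> - Ta (ta' + h)" "- Ts ta' \<le> - Ts (ta' + h)" "ta' \<le> T" for ta' h T
          using cmpDown[of ta' h T] that by auto
      qed (use ta that in auto)
      have "\<forall>a b. ta \<le> a \<longrightarrow> a \<le> b \<longrightarrow> Ta b \<le> Ta a"
        by (rule mono_from_sign_dec[OF cTa dTa']) (use ta sg in force)+
      moreover have "\<forall>a b. ta \<le> a \<longrightarrow> a \<le> b \<longrightarrow> Ts b \<le> Ts a"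
        by (rule mono_from_sign_dec[OF cTs dTs']) (use ta sg in force)+
      ultimately show ?thesis unfolding MonoA_def MonoS_def using ta(1) by (intro exI[of _ ta]) auto
    next
      case notB: False
      show ?thesis
      proof (cases "\<exists>ta>0. u ta = 0 \<and> v ta = 0")
        case True
        then obtain ta where ta: "ta > 0" "u ta = 0" "v ta = 0" by blast
        have FA0: "FA (Ta ta) (Ts ta) = 0" and FS0: "FS (Ta ta) (Ts ta) = 0" using ta unfolding u_def v_def by auto
        have const: "Ta T = Ta ta \<and> Ts T = Ts ta" if "ta \<le> T" for T
        proof -
          have 1: "Ta T \<le> (\<lambda>_. Ta ta) T \<and> Ts T \<le> (\<lambda>_. Ts ta) T"
          proof (rule cmp[where xa=Ta and xs=Ts and ya="\<lambda>_. Ta ta" and ys="\<lambda>_. Ts ta" and T=T and xa'=u and xs'=v and ya'="\<lambda>_. 0" and ys'="\<lambda>_. 0" and tt=ta])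
            show "continuous_on {ta..} Ta" "continuous_on {ta..} Ts" using cTa' cTs' ta by auto
            show "(Ta has_real_derivative u t) (at t)" if "t > ta" for t using dTa' that ta by auto
            show "(Ts has_real_derivative v t) (at t)" if "t > ta" for t using dTs' that ta by auto
          qed (use that FA0 FS0 in \<open>auto simp: u_def v_def\<close>)
          have 2: "(\<lambda>_. Ta ta) T \<le> Ta T \<and> (\<lambda>_. Ts ta) T \<le> Ts T"
          proof (rule cmp[where ya=Ta and ys=Ts and xa="\<lambda>_. Ta ta" and xs="\<lambda>_. Ts ta" and T=T and ya'=u and ys'=v and xa'="\<lambda>_. 0" and xs'="\<lambda>_. 0" and tt=ta])
            show "continuous_on {ta..} Ta" "continuous_on {ta..} Ts" using cTa' cTs' ta by auto
            show "(Ta has_real_derivative u t) (at t)" if "t > ta" for t using dTa' that ta by auto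
            show "(Ts has_real_derivative v t) (at t)" if "t > ta" for t using dTs' that ta by auto
          qed (use that FA0 FS0 in \<open>auto simp: u_def v_def\<close>)
          from 1 2 show ?thesis by auto
        qed
        have "MonoA ta" unfolding MonoA_def
        proof (intro disjI1 allI impI)
          fix a b :: real assume "ta \<le> a" "a \<le> b"
          then show "Ta a \<le> Ta b" using const[of a] const[of b] by simp
        qed
        moreover have "MonoS ta" unfolding MonoS_def
        proof (intro disjI1 allI impI)
          fix a b :: real assume "ta \<le> a" "a \<le> b"
          then show "Ts a \<le> Ts b" using const[of a] const[of b] by simp
        qed
        ultimately have "0 \<le> ta \<and> MonoA ta \<and> MonoS ta" using ta(1) by simp
        then show ?thesis by (rule exI[of _ ta])
      next
        case notC: False
        have excl: "\<not> (u t > 0 \<and> v t > 0)" "\<not> (u t < 0 \<and> v t < 0)" "\<not> (u t = 0 \<and> v t = 0)" if "t > 0" for t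
          using notA notB notC that by blast+
        have cuv: "continuous_on {a..b} (\<lambda>t. u t - v t)" if "a > 0" for a b
        proof (rule continuous_at_imp_continuous_on, intro ballI)
          fix x assume "x \<in> {a..b}"
          then have "x > 0" using that by auto
          then show "isCont (\<lambda>t. u t - v t) x" using icu icv by (intro continuous_intros) auto
        qed
        have "(\<forall>t>0. u t \<le> 0 \<and> v t \<ge> 0) \<or> (\<forall>t>0. u t \<ge> 0 \<and> v t \<le> 0)"
        proof (rule ccontr)
          assume "\<not> ?thesis"
          then obtain t1 t2 where t1: "t1 > 0" "\<not> (u t1 \<le> 0 \<and> v t1 \<ge> 0)" and t2: "t2 > 0" "\<not> (u t2 \<ge> 0 \<and> v t2 \<le> 0)"
            by auto
          have p1: "u t1 - v t1 > 0" using excl[OF t1(1)] t1(2) by linarith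
          have p2: "u t2 - v t2 < 0" using excl[OF t2(1)] t2(2) by linarith
          obtain x where x: "min t1 t2 \<le> x" "x \<le> max t1 t2" "u x - v x = 0"
          proof (cases "t1 \<le> t2")
            case True
            obtain x where "t1 \<le> x" "x \<le> t2" "u x - v x = 0"
              using IVT2'[of "\<lambda>t. u t - v t" t2 0 t1] p1 p2 True cuv[OF t1(1), of t2] by auto
            then show ?thesis using that True by auto
          next
            case False
            obtain x where "t2 \<le> x" "x \<le> t1" "u x - v x = 0"
              using IVT'[of "\<lambda>t. u t - v t" t2 0 t1] p1 p2 False cuv[OF t2(1), of t1] by auto
            then show ?thesis using that False by auto
          qed
          have "x > 0" using x(1) t1(1) t2(1) by auto
          then show False using excl[of x] x(3) by linarith
        qed
        then show ?thesis
        proof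
          assume h: "\<forall>t>0. u t \<le> 0 \<and> v t \<ge> 0"
          have "\<forall>a b. 0 \<le> a \<longrightarrow> a \<le> b \<longrightarrow> Ta b \<le> Ta a"
            by (rule mono_from_sign_dec[OF cTa dTa']) (use h in auto)
          moreover have "\<forall>a b. 0 \<le> a \<longrightarrow> a \<le> b \<longrightarrow> Ts a \<le> Ts b"
            by (rule mono_from_sign[OF cTs dTs']) (use h in auto)
          ultimately show ?thesis unfolding MonoA_def MonoS_def by (intro exI[of _ 0]) auto
        next
          assume h: "\<forall>t>0. u t \<ge> 0 \<and> v t \<le> 0"
          have "\<forall>a b. 0 \<le> a \<longrightarrow> a \<le> b \<longrightarrow> Ta a \<le> Ta b"
            by (rule mono_from_sign[OF cTa dTa']) (use h in auto)
          moreover have "\<forall>a b. 0 \<le> a \<longrightarrow> a \<le> b \<longrightarrow> Ts b \<le> Ts a"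
            by (rule mono_from_sign_dec[OF cTs dTs']) (use h in auto)
          ultimately show ?thesis unfolding MonoA_def MonoS_def by (intro exI[of _ 0]) auto
        qed
      qed
    qed
  qed
  then obtain t1 where t1: "t1 \<ge> 0" "MonoA t1" "MonoS t1" by blast
  obtain a where la: "(Ta \<longlongrightarrow> a) at_top"
    using mono_conv[of t1 Ta m] t1 bndA unfolding MonoA_def by blast
  obtain s where ls: "(Ts \<longlongrightarrow> s) at_top"
    using mono_conv[of t1 Ts "k*m"] t1 bndS unfolding MonoS_def by blast
  have bA: "((\<lambda>t. betaa (Ta t)) \<longlongrightarrow> betaa a) at_top" by (rule isCont_tendsto_compose[OF contA la])
  have bS: "((\<lambda>t. betas (Ts t)) \<longlongrightarrow> betas s) at_top" by (rule isCont_tendsto_compose[OF contS ls])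
  have tu: "(u \<longlongrightarrow> FA a s) at_top"
    unfolding u_def[abs_def] FA_def rhs_a_def by (intro tendsto_intros la ls bA) (use ga in auto)
  have tv: "(v \<longlongrightarrow> FS a s) at_top"
    unfolding v_def[abs_def] FS_def rhs_s_def by (intro tendsto_intros la ls bS) (use gs in auto)
  have "FA a s = 0" by (rule limit_deriv_zero[OF dTa' la tu])
  then have ea0: "rhs_a lam q sB ea betaa a s = 0" unfolding FA_def using ga by simp
  have "FS a s = 0" by (rule limit_deriv_zero[OF dTs' ls tv])
  then have es0: "rhs_s lam q sB ea betas a s = 0" unfolding FS_def using gs by simp
  show ?thesis using ea0 es0 la ls by blast
qed

end
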